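(* Let $\mathbf C$ be an admissible category of lattices. The adjunction $\mathbb P\dashv\mathrm{pt}$ between $\mathbf{Conv}$ and $(\mathbf C^{\mathrm{conv}})^{op}$ restricts to an adjunction between the category $\mathbf{Lim}$ of limit spaces and $(\mathbf C^{\mathrm{lim}})^{op}$, and also to an adjunction between $\mathbf{Lim}$ and $(\mathbf C^{\mathrm{lim}}_{\mathrm{cl}})^{op}$.
   Context: Setting: a filter on an inf-semilattice $L$ is a non-empty upward-closed subset closed under binary meets ($L$ allowed); $\mathbb F L$ is the set of filters. A category of lattices has lattices as objects and lattice morphisms; it is admissible if every powerset $\mathbb P(X)$ is an object and there are classes of index sets $\mathcal I,\mathcal J$ with morphisms exactly the monotone maps preserving existing $I$-indexed infima ($I\in\mathcal I$) and $J$-indexed suprema ($J\in\mathcal J$). A convergence $\mathbf C$-object is $(L,\lim_L)$ with $\lim_L:\mathbb F L\to L$ monotone; $\mathbf C^{\mathrm{conv}}$-morphisms are $\mathbf C$-morphisms $\varphi:L\to L'$ with $\lim_{L'}\mathcal F\le\varphi(\lim_L\varphi^{-1}(\mathcal F))$. Convergence spaces and $\mathbf{Conv}$: a set $X$ with relation $\to$ between filters of subsets and points, with $\{S:x\in S\}\to x$ and upward monotonicity in the filter; continuous maps preserve convergence via image filters. $\mathbb P(X)$ has $\lim\mathcal F=\{x:\mathcal F\to x\}$, $\mathbb P(f)=f^{-1}$. $\mathrm{pt}\,L$ is the set of $\mathbf C^{\mathrm{conv}}$-morphisms $L\to\{\emptyset,\{*\}\}$ (the latter with constant limit $\{*\}$),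 with $\ell^\bullet=\{\psi:\psi(\ell)=\{*\}\}$ and $\mathcal F\to\psi$ iff $\psi\in(\lim_L\{\ell:\ell^\bullet\in\mathcal F\})^\bullet$; $\mathrm{pt}\,\varphi(\psi)=\psi\circ\varphi$. It is known that $\mathbb P\dashv\mathrm{pt}$ is an adjunction between $\mathbf{Conv}$ and $(\mathbf C^{\mathrm{conv}})^{op}$. A limit space is a convergence space in which $\mathcal F\to x$ and $\mathcal G\to x$ imply $\mathcal F\cap\mathcal G\to x$; $\mathbf{Lim}$ is the full subcategory of $\mathbf{Conv}$ of limit spaces. A limit $\mathbf C$-object is a convergence $\mathbf C$-object with $\lim_L(\mathcal F\cap\mathcal G)=\lim_L\mathcal F\wedge\lim_L\mathcal G$ for all $\mathcal F,\mathcal G\in\mathbb F L$; $\mathbf C^{\mathrm{lim}}$ is the full subcategory of these. $\mathcal C_L$ is the set of complemented elements of $L$; a convergence $\mathbf C$-object is classical if for all filters $\mathcal F,\mathcal G$, $\mathcal F\cap\mathcal C_L=\mathcal G\cap\mathcal C_L$ implies $\lim_L\mathcal F=\lim_L\mathcal G$; $\mathbf C^{\mathrm{lim}}_{\mathrm{cl}}$ is the full subcategory of classical limit $\mathbf C$-objects. *)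

theory Defs
  imports Main
begin

text \<open>Lattices are modelled as types of class bounded_lattice (the whole type is the carrier).\<close>

definition lat_filter :: "'a::lattice set \<Rightarrow> bool" where
  "lat_filter F \<longleftrightarrow> F \<noteq> {} \<and> (\<forall>a\<in>F. \<forall>b. a \<le> b \<longrightarrow> b \<in> F)
     \<and> (\<forall>a\<in>F. \<forall>b\<in>F. inf a b \<in> F)"

definition is_inf_of :: "'a::order set \<Rightarrow> 'a \<Rightarrow> bool" where
  "is_inf_of A m \<longleftrightarrow> (\<forall>a\<in>A. m \<le> a) \<and> (\<forall>z. (\<forall>a\<in>A. z \<le> a) \<longrightarrow> z \<le> m)"

definition is_sup_of :: "'a::order set \<Rightarrow> 'a \<Rightarrow> bool" where
  "is_sup_of A m \<longleftrightarrow> (\<forall>a\<in>A. a \<le> m) \<and> (\<forall>z. (\<forall>a\<in>A. a \<le> z) \<longrightarrow> m \<le> z)"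

definition C_mor :: "'i set set \<Rightarrow> 'j set set \<Rightarrow> ('a::lattice \<Rightarrow> 'b::lattice) \<Rightarrow> bool" where
  "C_mor II JJ \<phi> \<longleftrightarrow> mono \<phi>
     \<and> (\<forall>I\<in>II. \<forall>(f::'i \<Rightarrow> 'a) m. is_inf_of (f ` I) m \<longrightarrow> is_inf_of (\<phi> ` f ` I) (\<phi> m))
     \<and> (\<forall>J\<in>JJ. \<forall>(f::'j \<Rightarrow> 'a) m. is_sup_of (f ` J) m \<longrightarrow> is_sup_of (\<phi> ` f ` J) (\<phi> m))"

text \<open>Index classes making the morphisms lattice morphisms (binary meets and joins, top).\<close>
definition admissible_index :: "'i set set \<Rightarrow> 'j set set \<Rightarrow> bool" where
  "admissible_index II JJ \<longleftrightarrow> {} \<in> II \<and> (\<exists>I\<in>II. card I = 2) \<and> (\<exists>J\<in>JJ. card J = 2)"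

definition conv_obj :: "('a::lattice set \<Rightarrow> 'a) \<Rightarrow> bool" where
  "conv_obj lim \<longleftrightarrow> (\<forall>F G. lat_filter F \<and> lat_filter G \<and> F \<subseteq> G \<longrightarrow> lim F \<le> lim G)"

definition limit_obj :: "('a::lattice set \<Rightarrow> 'a) \<Rightarrow> bool" where
  "limit_obj lim \<longleftrightarrow> conv_obj lim \<and>
     (\<forall>F G. lat_filter F \<and> lat_filter G \<longrightarrow> lim (F \<inter> G) = inf (lim F) (lim G))"

definition complemented :: "'a::bounded_lattice set" where
  "complemented = {l. \<exists>c. inf l c = bot \<and> sup l c = top}"

definition classical_obj :: "('a::bounded_lattice set \<Rightarrow> 'a) \<Rightarrow> bool" where
  "classical_obj lim \<longleftrightarrow> conv_obj lim \<and>
     (\<forall>F G. lat_filter F \<and> lat_filter G \<and> F \<inter> complemented = G \<inter> complemented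
        \<longrightarrow> lim F = lim G)"

definition conv_mor :: "'i set set \<Rightarrow> 'j set set \<Rightarrow> ('a::lattice set \<Rightarrow> 'a)
    \<Rightarrow> ('b::lattice set \<Rightarrow> 'b) \<Rightarrow> ('a \<Rightarrow> 'b) \<Rightarrow> bool" where
  "conv_mor II JJ lim lim' \<phi> \<longleftrightarrow> C_mor II JJ \<phi> \<and>
     (\<forall>F. lat_filter F \<longrightarrow> lim' F \<le> \<phi> (lim (\<phi> -` F)))"

definition set_filter :: "'x set \<Rightarrow> 'x set set \<Rightarrow> bool" where
  "set_filter S F \<longleftrightarrow> F \<subseteq> Pow S \<and> S \<in> F \<and> (\<forall>A\<in>F. \<forall>B. A \<subseteq> B \<and> B \<subseteq> S \<longrightarrow> B \<in> F)
     \<and> (\<forall>A\<in>F. \<forall>B\<in>F. A \<inter> B \<in> F)"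

definition conv_space :: "'x set \<Rightarrow> ('x set set \<Rightarrow> 'x \<Rightarrow> bool) \<Rightarrow> bool" where
  "conv_space S c \<longleftrightarrow> (\<forall>x\<in>S. c {A. A \<subseteq> S \<and> x \<in> A} x) \<and>
     (\<forall>F G x. set_filter S F \<and> set_filter S G \<and> x \<in> S \<and> F \<subseteq> G \<and> c F x \<longrightarrow> c G x)"

definition limit_space :: "'x set \<Rightarrow> ('x set set \<Rightarrow> 'x \<Rightarrow> bool) \<Rightarrow> bool" where
  "limit_space S c \<longleftrightarrow> conv_space S c \<and>
     (\<forall>F G x. set_filter S F \<and> set_filter S G \<and> x \<in> S \<and> c F x \<and> c G x \<longrightarrow> c (F \<inter> G) x)"

definition continuous_map :: "'x set \<Rightarrow> ('x set set \<Rightarrow> 'x \<Rightarrow> bool)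
    \<Rightarrow> 'y set \<Rightarrow> ('y set set \<Rightarrow> 'y \<Rightarrow> bool) \<Rightarrow> ('x \<Rightarrow> 'y) \<Rightarrow> bool" where
  "continuous_map S c S' c' f \<longleftrightarrow> f ` S \<subseteq> S' \<and>
     (\<forall>F x. set_filter S F \<and> x \<in> S \<and> c F x \<longrightarrow> c' {B. B \<subseteq> S' \<and> f -` B \<inter> S \<in> F} (f x))"

text \<open>P(X) for a convergence space on the whole type 'x.\<close>
definition pow_lim :: "('x set set \<Rightarrow> 'x \<Rightarrow> bool) \<Rightarrow> 'x set set \<Rightarrow> 'x set" where
  "pow_lim c F = {x. c F x}"

text \<open>The two-element object {emptyset, {*}} = P(unit), with constant limit {*}.\<close>
definition two_lim :: "unit set set \<Rightarrow> unit set" where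
  "two_lim F = {()}"

definition pt_points :: "'i set set \<Rightarrow> 'j set set \<Rightarrow> ('a::lattice set \<Rightarrow> 'a) \<Rightarrow> ('a \<Rightarrow> unit set) set" where
  "pt_points II JJ lim = {\<psi>. conv_mor II JJ lim two_lim \<psi>}"

definition pt_bullet :: "'i set set \<Rightarrow> 'j set set \<Rightarrow> ('a::lattice set \<Rightarrow> 'a) \<Rightarrow> 'a \<Rightarrow> ('a \<Rightarrow> unit set) set" where
  "pt_bullet II JJ lim l = {\<psi> \<in> pt_points II JJ lim. \<psi> l = {()}}"

definition pt_conv :: "'i set set \<Rightarrow> 'j set set \<Rightarrow> ('a::lattice set \<Rightarrow> 'a)
    \<Rightarrow> ('a \<Rightarrow> unit set) set set \<Rightarrow> ('a \<Rightarrow> unit set) \<Rightarrow> bool" where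
  "pt_conv II JJ lim F \<psi> \<longleftrightarrow> \<psi> \<in> pt_bullet II JJ lim (lim {l. pt_bullet II JJ lim l \<in> F})"

text \<open>Transpose of the adjunction: f : X -> pt L corresponds to l |-> f^{-1}(l^bullet).\<close>
definition adj_transpose :: "('x \<Rightarrow> 'a \<Rightarrow> unit set) \<Rightarrow> 'a \<Rightarrow> 'x set" where
  "adj_transpose f l = {x. f x l = {()}}"

end

theory Submission
  imports Defs
begin

lemma unit_set_eq: "(u::unit set) = {u'. () \<in> u}"
  by auto

lemma unit_eq_iff: "((u::unit set) = {()}) \<longleftrightarrow> () \<in> u"
  by auto

lemma unit_set_cases: "(u::unit set) = {} \<or> u = {()}"
  by auto

lemma is_inf_set: "is_inf_of (A::'x set set) m \<longleftrightarrow> m = \<Inter>A"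
proof
  assume h: "is_inf_of A m"
  then have "\<Inter>A \<subseteq> m" unfolding is_inf_of_def by (meson Inter_lower)
  moreover have "m \<subseteq> \<Inter>A" using h unfolding is_inf_of_def by blast
  ultimately show "m = \<Inter>A" by blast
qed (auto simp: is_inf_of_def)

lemma is_sup_set: "is_sup_of (A::'x set set) m \<longleftrightarrow> m = \<Union>A"
proof
  assume h: "is_sup_of A m"
  then have "m \<subseteq> \<Union>A" unfolding is_sup_of_def by (meson Union_upper)
  moreover have "\<Union>A \<subseteq> m" using h unfolding is_sup_of_def by blast
  ultimately show "m = \<Union>A" by blast
qed (auto simp: is_sup_of_def)

lemma lat_filter_set: "lat_filter (F::'x set set) \<longleftrightarrow> set_filter UNIV F"
  unfolding lat_filter_def set_filter_def by auto

lemma C_mor_top: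
  fixes II :: "'i set set" and JJ :: "'j set set"
  assumes "admissible_index II JJ" "C_mor II JJ (\<phi>::'a::bounded_lattice \<Rightarrow> 'b::bounded_lattice)"
  shows "\<phi> top = top"
proof -
  have "{} \<in> II" using assms(1) unfolding admissible_index_def by auto
  moreover have "is_inf_of ((\<lambda>_::'i. top::'a) ` {}) top" unfolding is_inf_of_def by auto
  ultimately have "is_inf_of (\<phi> ` (\<lambda>_::'i. top::'a) ` {}) (\<phi> top)"
    using assms(2) unfolding C_mor_def by blast
  then show ?thesis unfolding is_inf_of_def by (auto intro: top_le)
qed

lemma C_mor_inf:
  fixes II :: "'i set set" and JJ :: "'j set set"
  assumes "admissible_index II JJ" "C_mor II JJ (\<phi>::'a::lattice \<Rightarrow> 'b::lattice)"
  shows "\<phi> (inf a b) = inf (\<phi> a) (\<phi> b)"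
proof -
  obtain I where I: "I \<in> II" "card I = 2" using assms(1) unfolding admissible_index_def by auto
  then obtain i j where ij: "I = {i, j}" "i \<noteq> j" by (auto simp: card_2_iff)
  define g where "g = (\<lambda>k::'i. if k = i then a else b)"
  have gI: "g ` I = {a, b}" using ij unfolding g_def by auto
  have "is_inf_of (g ` I) (inf a b)" unfolding gI is_inf_of_def by auto
  then have "is_inf_of (\<phi> ` g ` I) (\<phi> (inf a b))"
    using assms(2) I(1) unfolding C_mor_def by blast
  then have h: "is_inf_of {\<phi> a, \<phi> b} (\<phi> (inf a b))" unfolding gI by simp
  then show ?thesis unfolding is_inf_of_def by (auto intro!: antisym)
qed

lemma C_mor_mono: "C_mor II JJ \<phi> \<Longrightarrow> a \<le> b \<Longrightarrow> \<phi> a \<le> \<phi> b"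
  unfolding C_mor_def by (auto dest: monoD)

lemma pow_lim_limit:
  assumes "limit_space UNIV c"
  shows "limit_obj (pow_lim c) \<and> classical_obj (pow_lim c)"
proof -
  have cs: "conv_space UNIV c" using assms unfolding limit_space_def by blast
  have cs2: "\<And>F G x. set_filter UNIV F \<Longrightarrow> set_filter UNIV G \<Longrightarrow> F \<subseteq> G \<Longrightarrow> c F x \<Longrightarrow> c G x"
    using cs unfolding conv_space_def by blast
  have co: "conv_obj (pow_lim c)"
    unfolding conv_obj_def pow_lim_def lat_filter_set
  proof (intro allI impI subsetI)
    fix F G x assume "set_filter UNIV F \<and> set_filter UNIV G \<and> F \<subseteq> G" "x \<in> {x. c F x}"
    then show "x \<in> {x. c G x}" using cs2 by blast
  qed
  have lo: "limit_obj (pow_lim c)"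
    unfolding limit_obj_def
  proof (intro conjI co allI impI)
    fix F G :: "'a set set" assume h: "lat_filter F \<and> lat_filter G"
    have "UNIV \<in> F" "UNIV \<in> G" using h unfolding lat_filter_set set_filter_def by simp_all
    then have FG: "lat_filter (F \<inter> G)" using h unfolding lat_filter_def by auto
    have "pow_lim c (F \<inter> G) \<subseteq> pow_lim c F" "pow_lim c (F \<inter> G) \<subseteq> pow_lim c G"
      using co FG h unfolding conv_obj_def by auto
    moreover have "pow_lim c F \<inter> pow_lim c G \<subseteq> pow_lim c (F \<inter> G)"
    proof
      fix x assume "x \<in> pow_lim c F \<inter> pow_lim c G"
      then have "c F x" "c G x" unfolding pow_lim_def by auto
      moreover have "set_filter UNIV F" "set_filter UNIV G" using h lat_filter_set by auto
      ultimately have "c (F \<inter> G) x" using assms unfolding limit_space_def by blast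
      then show "x \<in> pow_lim c (F \<inter> G)" unfolding pow_lim_def by simp
    qed
    ultimately show "pow_lim c (F \<inter> G) = inf (pow_lim c F) (pow_lim c G)" by auto
  qed
  have "l \<in> complemented" for l :: "'a set"
    unfolding complemented_def by (intro CollectI exI[of _ "- l"]) auto
  then have "complemented = (UNIV :: 'a set set)" by blast
  then have "classical_obj (pow_lim c)" unfolding classical_obj_def using co by auto
  with lo show ?thesis by blast
qed

lemma pt_C: "\<psi> \<in> pt_points II JJ lim \<Longrightarrow> C_mor II JJ \<psi>"
  unfolding pt_points_def conv_mor_def by blast

lemma bullet_top:
  fixes II :: "'i set set" and JJ :: "'j set set" and lim :: "'a::bounded_lattice set \<Rightarrow> 'a"
  assumes "admissible_index II JJ"
  shows "pt_bullet II JJ lim top = pt_points II JJ lim"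
  using C_mor_top[OF assms pt_C] unfolding pt_bullet_def by auto

lemma bullet_inf:
  fixes II :: "'i set set" and JJ :: "'j set set" and lim :: "'a::bounded_lattice set \<Rightarrow> 'a"
  assumes "admissible_index II JJ"
  shows "pt_bullet II JJ lim (inf a b) = pt_bullet II JJ lim a \<inter> pt_bullet II JJ lim b"
proof -
  have "\<psi> (inf a b) = \<psi> a \<inter> \<psi> b" if "\<psi> \<in> pt_points II JJ lim" for \<psi>
    using C_mor_inf[OF assms pt_C[OF that]] by simp
  then show ?thesis unfolding pt_bullet_def unit_eq_iff by auto
qed

lemma bullet_mono:
  "a \<le> b \<Longrightarrow> pt_bullet II JJ lim a \<subseteq> pt_bullet II JJ lim b"
  using C_mor_mono[OF pt_C] unfolding pt_bullet_def unit_eq_iff by blast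

lemma bullet_sub: "pt_bullet II JJ lim a \<subseteq> pt_points II JJ lim"
  unfolding pt_bullet_def by blast

lemma bullet_filter:
  fixes II :: "'i set set" and JJ :: "'j set set" and lim :: "'a::bounded_lattice set \<Rightarrow> 'a"
  assumes "admissible_index II JJ" "set_filter (pt_points II JJ lim) F"
  shows "lat_filter {l. pt_bullet II JJ lim l \<in> F}"
  unfolding lat_filter_def
proof (intro conjI ballI allI impI)
  show "{l. pt_bullet II JJ lim l \<in> F} \<noteq> {}"
    using bullet_top[OF assms(1), of lim] assms(2) unfolding set_filter_def by (auto intro!: exI[of _ top])
next
  fix a b assume "a \<in> {l. pt_bullet II JJ lim l \<in> F}" "a \<le> b"
  then show "b \<in> {l. pt_bullet II JJ lim l \<in> F}"
    using bullet_mono[of a b II JJ lim] bullet_sub[of II JJ lim b] assms(2)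
    unfolding set_filter_def by auto
next
  fix a b assume "a \<in> {l. pt_bullet II JJ lim l \<in> F}" "b \<in> {l. pt_bullet II JJ lim l \<in> F}"
  then show "inf a b \<in> {l. pt_bullet II JJ lim l \<in> F}"
    using bullet_inf[OF assms(1), of lim a b] assms(2) unfolding set_filter_def by auto
qed

lemma pt_limit:
  fixes II :: "'i set set" and JJ :: "'j set set" and lim :: "'a::bounded_lattice set \<Rightarrow> 'a"
  assumes adm: "admissible_index II JJ" and lo: "limit_obj lim"
  shows "limit_space (pt_points II JJ lim) (pt_conv II JJ lim)"
proof -
  have co: "conv_obj lim" using lo unfolding limit_obj_def by blast
  have A: "pt_conv II JJ lim {A. A \<subseteq> pt_points II JJ lim \<and> \<psi> \<in> A} \<psi>"
    if "\<psi> \<in> pt_points II JJ lim" for \<psi>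
  proof -
    have cm: "conv_mor II JJ lim two_lim \<psi>" using that unfolding pt_points_def by blast
    have lf: "lat_filter {{()}}" unfolding lat_filter_def by auto
    have "{()} \<subseteq> \<psi> (lim (\<psi> -` {{()}}))"
      using cm lf unfolding conv_mor_def two_lim_def by auto
    moreover have "{l. pt_bullet II JJ lim l \<in> {A. A \<subseteq> pt_points II JJ lim \<and> \<psi> \<in> A}}
        = \<psi> -` {{()}}"
      using that unfolding pt_bullet_def by auto
    ultimately show ?thesis using that unfolding pt_conv_def pt_bullet_def by auto
  qed
  have B: "pt_conv II JJ lim G \<psi>"
    if h: "set_filter (pt_points II JJ lim) F" "set_filter (pt_points II JJ lim) G"
      "F \<subseteq> G" "pt_conv II JJ lim F \<psi>" for F G \<psi>
  proof -
    have "lim {l. pt_bullet II JJ lim l \<in> F} \<le> lim {l. pt_bullet II JJ lim l \<in> G}"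
      using co bullet_filter[OF adm h(1)] bullet_filter[OF adm h(2)] h(3)
      unfolding conv_obj_def by blast
    then show ?thesis using h(4) bullet_mono unfolding pt_conv_def by blast
  qed
  have C: "pt_conv II JJ lim (F \<inter> G) \<psi>"
    if h: "set_filter (pt_points II JJ lim) F" "set_filter (pt_points II JJ lim) G"
      "pt_conv II JJ lim F \<psi>" "pt_conv II JJ lim G \<psi>" for F G \<psi>
  proof -
    have e: "{l. pt_bullet II JJ lim l \<in> F \<inter> G} =
        {l. pt_bullet II JJ lim l \<in> F} \<inter> {l. pt_bullet II JJ lim l \<in> G}" by auto
    have "lim ({l. pt_bullet II JJ lim l \<in> F} \<inter> {l. pt_bullet II JJ lim l \<in> G})
       = inf (lim {l. pt_bullet II JJ lim l \<in> F}) (lim {l. pt_bullet II JJ lim l \<in> G})"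
      using lo bullet_filter[OF adm h(1)] bullet_filter[OF adm h(2)] unfolding limit_obj_def by blast
    then show ?thesis using h(3,4) bullet_inf[OF adm, of lim]
      unfolding pt_conv_def e by simp
  qed
  show ?thesis unfolding limit_space_def conv_space_def using A B C by blast
qed

lemma adj_transpose_alt: "adj_transpose f l = {x. () \<in> f x l}"
  unfolding adj_transpose_def unit_eq_iff by simp

lemma transpose_mor:
  fixes II :: "'i set set" and JJ :: "'j set set" and lim :: "'a::bounded_lattice set \<Rightarrow> 'a"
    and c :: "'x set set \<Rightarrow> 'x \<Rightarrow> bool"
  assumes adm: "admissible_index II JJ"
    and f: "continuous_map UNIV c (pt_points II JJ lim) (pt_conv II JJ lim) f"
  shows "conv_mor II JJ lim (pow_lim c) (adj_transpose f)"
proof -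
  have fp: "f x \<in> pt_points II JJ lim" for x using f unfolding continuous_map_def by blast
  have fC: "C_mor II JJ (f x)" for x using pt_C[OF fp] .
  have mono: "mono (adj_transpose f)"
  proof (rule monoI)
    fix a b :: 'a assume "a \<le> b"
    then have "f x a \<subseteq> f x b" for x using C_mor_mono[OF fC] by blast
    then show "adj_transpose f a \<le> adj_transpose f b" unfolding adj_transpose_alt by blast
  qed
  have infs: "is_inf_of (adj_transpose f ` g ` I) (adj_transpose f m)"
    if "I \<in> II" "is_inf_of (g ` I) m" for I and g :: "'i \<Rightarrow> 'a" and m
  proof -
    have "is_inf_of (f x ` g ` I) (f x m)" for x using fC[of x] that unfolding C_mor_def by blast
    then have e: "f x m = \<Inter>(f x ` g ` I)" for x by (simp only: is_inf_set)
    have "adj_transpose f m = \<Inter>(adj_transpose f ` g ` I)"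
      unfolding adj_transpose_alt using e by auto
    then show ?thesis by (simp add: is_inf_set)
  qed
  have sups: "is_sup_of (adj_transpose f ` g ` J) (adj_transpose f m)"
    if "J \<in> JJ" "is_sup_of (g ` J) m" for J and g :: "'j \<Rightarrow> 'a" and m
  proof -
    have "is_sup_of (f x ` g ` J) (f x m)" for x using fC[of x] that unfolding C_mor_def by blast
    then have e: "f x m = \<Union>(f x ` g ` J)" for x by (simp only: is_sup_set)
    have "adj_transpose f m = \<Union>(adj_transpose f ` g ` J)"
      unfolding adj_transpose_alt using e by auto
    then show ?thesis by (simp add: is_sup_set)
  qed
  have lc: "pow_lim c F \<le> adj_transpose f (lim (adj_transpose f -` F))"
    if F: "lat_filter F" for F
  proof
    fix x assume "x \<in> pow_lim c F"
    then have "c F x" unfolding pow_lim_def by simp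
    moreover have "set_filter UNIV F" using F lat_filter_set by blast
    ultimately have "pt_conv II JJ lim {B. B \<subseteq> pt_points II JJ lim \<and> f -` B \<inter> UNIV \<in> F} (f x)"
      using f unfolding continuous_map_def by blast
    moreover have "{l. pt_bullet II JJ lim l \<in> {B. B \<subseteq> pt_points II JJ lim \<and> f -` B \<inter> UNIV \<in> F}}
       = adj_transpose f -` F"
    proof -
      have "f -` pt_bullet II JJ lim l \<inter> UNIV = adj_transpose f l" for l
        unfolding pt_bullet_def adj_transpose_def using fp by auto
      then show ?thesis using bullet_sub[of II JJ lim] by auto
    qed
    ultimately show "x \<in> adj_transpose f (lim (adj_transpose f -` F))"
      unfolding pt_conv_def pt_bullet_def adj_transpose_def by simp
  qed
  show ?thesis unfolding conv_mor_def C_mor_def using mono infs sups lc by blast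
qed

definition untranspose :: "('a \<Rightarrow> 'x set) \<Rightarrow> 'x \<Rightarrow> 'a \<Rightarrow> unit set" where
  "untranspose \<phi> x l = {u. x \<in> \<phi> l}"

lemma untranspose_mem: "(() \<in> untranspose \<phi> x l) = (x \<in> \<phi> l)"
  unfolding untranspose_def by simp

lemma untranspose_pt:
  fixes II :: "'i set set" and JJ :: "'j set set" and lim :: "'a::bounded_lattice set \<Rightarrow> 'a"
    and c :: "'x set set \<Rightarrow> 'x \<Rightarrow> bool"
  assumes cs: "conv_space UNIV c"
    and phi: "conv_mor II JJ lim (pow_lim c) \<phi>"
  shows "untranspose \<phi> x \<in> pt_points II JJ lim"
proof -
  have pC: "C_mor II JJ \<phi>" using phi unfolding conv_mor_def by blast
  have plc: "pow_lim c G \<le> \<phi> (lim (\<phi> -` G))" if "lat_filter G" for G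
    using phi that unfolding conv_mor_def by blast
  have mono: "mono (untranspose \<phi> x)"
  proof (rule monoI)
    fix a b :: 'a assume "a \<le> b"
    then have "\<phi> a \<subseteq> \<phi> b" using C_mor_mono[OF pC] by blast
    then show "untranspose \<phi> x a \<le> untranspose \<phi> x b" unfolding untranspose_def by blast
  qed
  have infs: "is_inf_of (untranspose \<phi> x ` g ` I) (untranspose \<phi> x m)"
    if "I \<in> II" "is_inf_of (g ` I) m" for I and g :: "'i \<Rightarrow> 'a" and m
  proof -
    have "is_inf_of (\<phi> ` g ` I) (\<phi> m)" using pC that unfolding C_mor_def by blast
    then have e: "\<phi> m = \<Inter>(\<phi> ` g ` I)" by (simp add: is_inf_set)
    have "untranspose \<phi> x m = \<Inter>(untranspose \<phi> x ` g ` I)"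
    proof (rule set_eqI)
      fix u :: unit show "u \<in> untranspose \<phi> x m \<longleftrightarrow> u \<in> \<Inter>(untranspose \<phi> x ` g ` I)"
        using e by (cases u) (simp add: untranspose_mem)
    qed
    then show ?thesis by (simp add: is_inf_set)
  qed
  have sups: "is_sup_of (untranspose \<phi> x ` g ` J) (untranspose \<phi> x m)"
    if "J \<in> JJ" "is_sup_of (g ` J) m" for J and g :: "'j \<Rightarrow> 'a" and m
  proof -
    have "is_sup_of (\<phi> ` g ` J) (\<phi> m)" using pC that unfolding C_mor_def by blast
    then have e: "\<phi> m = \<Union>(\<phi> ` g ` J)" by (simp add: is_sup_set)
    have "untranspose \<phi> x m = \<Union>(untranspose \<phi> x ` g ` J)"
    proof (rule set_eqI)
      fix u :: unit show "u \<in> untranspose \<phi> x m \<longleftrightarrow> u \<in> \<Union>(untranspose \<phi> x ` g ` J)"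
        using e by (cases u) (simp add: untranspose_mem)
    qed
    then show ?thesis by (simp add: is_sup_set)
  qed
  have prin: "c {A. A \<subseteq> UNIV \<and> x \<in> A} x" using cs unfolding conv_space_def by blast
  have sfp: "set_filter UNIV {A. A \<subseteq> UNIV \<and> x \<in> A}" unfolding set_filter_def by auto
  have sfu: "set_filter UNIV (UNIV :: 'x set set)" unfolding set_filter_def by auto
  have cU: "c UNIV x"
    using cs sfp sfu prin unfolding conv_space_def by blast
  have lc: "two_lim F \<le> untranspose \<phi> x (lim (untranspose \<phi> x -` F))"
    if F: "lat_filter F" for F
  proof -
    have up: "\<forall>a\<in>F. \<forall>b. a \<le> b \<longrightarrow> b \<in> F" using F unfolding lat_filter_def by blast
    show ?thesis
  proof (cases "{} \<in> F")
    case True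
    have "A \<in> F" for A using up True by blast
    then have "F = UNIV" by blast
    then have e: "untranspose \<phi> x -` F = \<phi> -` UNIV" by simp
    have "x \<in> \<phi> (lim (\<phi> -` UNIV))"
      using plc[of UNIV] cU sfu lat_filter_set unfolding pow_lim_def by blast
    then show ?thesis unfolding e two_lim_def untranspose_def by simp
  next
    case False
    have "F \<noteq> {}" using F unfolding lat_filter_def by blast
    then obtain a where "a \<in> F" by (meson ex_in_conv)
    moreover have "a \<subseteq> {()}" by auto
    ultimately have "{()} \<in> F" using up by blast
    have u: "{u::unit. P} = (if P then {()} else {})" for P by auto
    have "({u::unit. x \<in> \<phi> l} \<in> F) = (x \<in> \<phi> l)" for l
      using False \<open>{()} \<in> F\<close> unfolding u by simp
    then have e: "untranspose \<phi> x -` F = \<phi> -` {A. A \<subseteq> UNIV \<and> x \<in> A}"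
      unfolding untranspose_def by auto
    have "x \<in> \<phi> (lim (\<phi> -` {A. A \<subseteq> UNIV \<and> x \<in> A}))"
      using plc[of "{A. A \<subseteq> UNIV \<and> x \<in> A}"] prin sfp lat_filter_set unfolding pow_lim_def by blast
    then show ?thesis unfolding e two_lim_def untranspose_def by simp
  qed
  qed
  show ?thesis unfolding pt_points_def conv_mor_def C_mor_def using mono infs sups lc by blast
qed

lemma untranspose_cont:
  fixes II :: "'i set set" and JJ :: "'j set set" and lim :: "'a::bounded_lattice set \<Rightarrow> 'a"
    and c :: "'x set set \<Rightarrow> 'x \<Rightarrow> bool"
  assumes cs: "conv_space UNIV c"
    and phi: "conv_mor II JJ lim (pow_lim c) \<phi>"
  shows "continuous_map UNIV c (pt_points II JJ lim) (pt_conv II JJ lim) (untranspose \<phi>)"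
proof -
  have pts: "untranspose \<phi> x \<in> pt_points II JJ lim" for x using untranspose_pt[OF cs phi] .
  have plc: "pow_lim c G \<le> \<phi> (lim (\<phi> -` G))" if "lat_filter G" for G
    using phi that unfolding conv_mor_def by blast
  have pre: "untranspose \<phi> -` pt_bullet II JJ lim l \<inter> UNIV = \<phi> l" for l
    unfolding pt_bullet_def using pts by (auto simp: unit_eq_iff untranspose_mem)
  have cont: "pt_conv II JJ lim {B. B \<subseteq> pt_points II JJ lim \<and> untranspose \<phi> -` B \<inter> UNIV \<in> F}
      (untranspose \<phi> x)" if F: "set_filter UNIV F" and cx: "c F x" for F x
  proof -
    have e: "{l. pt_bullet II JJ lim l \<in> {B. B \<subseteq> pt_points II JJ lim \<and> untranspose \<phi> -` B \<inter> UNIV \<in> F}}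
       = \<phi> -` F" using pre bullet_sub[of II JJ lim] by auto
    have "x \<in> \<phi> (lim (\<phi> -` F))" using plc[of F] F cx lat_filter_set unfolding pow_lim_def by blast
    then show ?thesis unfolding pt_conv_def e pt_bullet_def using pts by (simp add: unit_eq_iff untranspose_mem vimage_def)
  qed
  show ?thesis unfolding continuous_map_def using pts cont by blast
qed

lemma adj_bij:
  fixes II :: "'i set set" and JJ :: "'j set set" and lim :: "'a::bounded_lattice set \<Rightarrow> 'a"
    and c :: "'x set set \<Rightarrow> 'x \<Rightarrow> bool"
  assumes adm: "admissible_index II JJ" and cs: "conv_space UNIV c"
  shows "bij_betw adj_transpose
           {f. continuous_map UNIV c (pt_points II JJ lim) (pt_conv II JJ lim) f}
           {\<phi>. conv_mor II JJ lim (pow_lim c) \<phi>}"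
proof (rule bij_betw_byWitness[where f'=untranspose])
  show "\<forall>a\<in>{f. continuous_map UNIV c (pt_points II JJ lim) (pt_conv II JJ lim) f}.
          untranspose (adj_transpose a) = a"
  proof
    fix f :: "'x \<Rightarrow> 'a \<Rightarrow> unit set"
    have "untranspose (adj_transpose f) x l = f x l" for x l
      unfolding untranspose_def adj_transpose_alt by auto
    then show "untranspose (adj_transpose f) = f" by (intro ext)
  qed
  show "\<forall>a'\<in>{\<phi>. conv_mor II JJ lim (pow_lim c) \<phi>}. adj_transpose (untranspose a') = a'"
    unfolding adj_transpose_alt untranspose_def by auto
  show "adj_transpose ` {f. continuous_map UNIV c (pt_points II JJ lim) (pt_conv II JJ lim) f}
      \<subseteq> {\<phi>. conv_mor II JJ lim (pow_lim c) \<phi>}"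
    using transpose_mor[OF adm] by blast
  show "untranspose ` {\<phi>. conv_mor II JJ lim (pow_lim c) \<phi>}
      \<subseteq> {f. continuous_map UNIV c (pt_points II JJ lim) (pt_conv II JJ lim) f}"
    using untranspose_cont[OF cs] by blast
qed

theorem mainTheorem6:
  fixes II :: "'i set set" and JJ :: "'j set set"
  assumes "admissible_index II JJ"
  shows
    \<comment> \<open>P maps Lim into C^lim and into C^lim_cl\<close>
    "(\<forall>c :: 'x set set \<Rightarrow> 'x \<Rightarrow> bool. limit_space UNIV c \<longrightarrow>
         limit_obj (pow_lim c) \<and> (limit_obj (pow_lim c) \<and> classical_obj (pow_lim c)))
     \<comment> \<open>pt maps C^lim and C^lim_cl into Lim\<close>
     \<and> (\<forall>lim :: 'a::bounded_lattice set \<Rightarrow> 'a. limit_obj lim \<longrightarrow>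
         limit_space (pt_points II JJ lim) (pt_conv II JJ lim))
     \<and> (\<forall>lim :: 'a set \<Rightarrow> 'a. limit_obj lim \<and> classical_obj lim \<longrightarrow>
         limit_space (pt_points II JJ lim) (pt_conv II JJ lim))
     \<comment> \<open>the adjunction bijection restricts: Lim(X, pt L) = C^lim(L, P X)\<close>
     \<and> (\<forall>(c :: 'x set set \<Rightarrow> 'x \<Rightarrow> bool) (lim :: 'a set \<Rightarrow> 'a).
         limit_space UNIV c \<and> limit_obj lim \<longrightarrow>
         bij_betw adj_transpose
           {f. continuous_map UNIV c (pt_points II JJ lim) (pt_conv II JJ lim) f}
           {\<phi>. conv_mor II JJ lim (pow_lim c) \<phi>})
     \<and> (\<forall>(c :: 'x set set \<Rightarrow> 'x \<Rightarrow> bool) (lim :: 'a set \<Rightarrow> 'a).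
         limit_space UNIV c \<and> limit_obj lim \<and> classical_obj lim \<longrightarrow>
         bij_betw adj_transpose
           {f. continuous_map UNIV c (pt_points II JJ lim) (pt_conv II JJ lim) f}
           {\<phi>. conv_mor II JJ lim (pow_lim c) \<phi>})"
proof -
  have cs: "conv_space UNIV c" if "limit_space UNIV c" for c :: "'x set set \<Rightarrow> 'x \<Rightarrow> bool"
    using that unfolding limit_space_def by blast
  have A: "\<forall>c :: 'x set set \<Rightarrow> 'x \<Rightarrow> bool. limit_space UNIV c \<longrightarrow>
         limit_obj (pow_lim c) \<and> (limit_obj (pow_lim c) \<and> classical_obj (pow_lim c))"
    using pow_lim_limit by blast
  have B: "\<forall>lim :: 'a::bounded_lattice set \<Rightarrow> 'a. limit_obj lim \<longrightarrow>
         limit_space (pt_points II JJ lim) (pt_conv II JJ lim)"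
    using pt_limit[OF assms] by blast
  have C: "\<forall>lim :: 'a set \<Rightarrow> 'a. limit_obj lim \<and> classical_obj lim \<longrightarrow>
         limit_space (pt_points II JJ lim) (pt_conv II JJ lim)"
    using pt_limit[OF assms] by blast
  have D: "\<forall>(c :: 'x set set \<Rightarrow> 'x \<Rightarrow> bool) (lim :: 'a set \<Rightarrow> 'a).
         limit_space UNIV c \<and> limit_obj lim \<longrightarrow>
         bij_betw adj_transpose
           {f. continuous_map UNIV c (pt_points II JJ lim) (pt_conv II JJ lim) f}
           {\<phi>. conv_mor II JJ lim (pow_lim c) \<phi>}"
    using adj_bij[OF assms cs] by blast
  have E: "\<forall>(c :: 'x set set \<Rightarrow> 'x \<Rightarrow> bool) (lim :: 'a set \<Rightarrow> 'a).
         limit_space UNIV c \<and> limit_obj lim \<and> classical_obj lim \<longrightarrow>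
         bij_betw adj_transpose
           {f. continuous_map UNIV c (pt_points II JJ lim) (pt_conv II JJ lim) f}
           {\<phi>. conv_mor II JJ lim (pow_lim c) \<phi>}"
    using adj_bij[OF assms cs] by blast
  show ?thesis by (rule conjI[OF A conjI[OF B conjI[OF C conjI[OF D E]]]])
qed

end
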